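(* Let $E$ be a $\sigma$-unital $C^*$-algebra and let $L\subseteq M(E)$ be a separable sub-$C^*$-algebra. Then there exists a separable sub-$C^*$-algebra $D\subseteq E$ containing an approximate unit for $E$ such that the image of the naturally induced unital injective $*$-homomorphism $M(D)\to M(E)$ contains $L$.
   Context: If $D\subseteq E$ is a sub-$C^*$-algebra containing an approximate unit of $E$, the inclusion $D\to E$ induces a unital injective $*$-homomorphism $M(D)\to M(E)$ (realizing $M(D)=\{x\in D^{**}:xD+Dx\subseteq D\}\subseteq D^{**}\subseteq E^{**}$ and similarly for $E$). *)

theory Defs
  imports "HOL-Analysis.Analysis"
begin

text \<open>A (possibly non-unital) C*-algebra structure on a type: the type is a real Banach
algebra, equipped with a complex scalar multiplication sc (extending the real one)
and an involution adj satisfying the C*-identity.\<close>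

definition cstar_algebra ::
  "(complex \<Rightarrow> 'a::{banach,real_normed_algebra} \<Rightarrow> 'a) \<Rightarrow> ('a \<Rightarrow> 'a) \<Rightarrow> bool" where
  "cstar_algebra sc adj \<longleftrightarrow>
     (\<forall>r x. sc (complex_of_real r) x = scaleR r x) \<and>
     (\<forall>a x y. sc a (x + y) = sc a x + sc a y) \<and>
     (\<forall>a b x. sc (a + b) x = sc a x + sc b x) \<and>
     (\<forall>a b x. sc (a * b) x = sc a (sc b x)) \<and>
     (\<forall>a x y. sc a (x * y) = sc a x * y \<and> sc a (x * y) = x * sc a y) \<and>
     (\<forall>a x. norm (sc a x) = cmod a * norm x) \<and>
     (\<forall>x. adj (adj x) = x) \<and>
     (\<forall>x y. adj (x + y) = adj x + adj y) \<and>
     (\<forall>x y. adj (x * y) = adj y * adj x) \<and>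
     (\<forall>a x. adj (sc a x) = sc (cnj a) (adj x)) \<and>
     (\<forall>x. norm (adj x * x) = (norm x)\<^sup>2)"

definition csub ::
  "(complex \<Rightarrow> 'a::{banach,real_normed_algebra} \<Rightarrow> 'a) \<Rightarrow> ('a \<Rightarrow> 'a) \<Rightarrow> 'a set \<Rightarrow> bool" where
  "csub sc adj D \<longleftrightarrow> 0 \<in> D \<and>
     (\<forall>x\<in>D. \<forall>y\<in>D. x + y \<in> D \<and> x * y \<in> D) \<and>
     (\<forall>x\<in>D. adj x \<in> D \<and> (\<forall>c. sc c x \<in> D)) \<and> closed D"

definition separable_set :: "'a::metric_space set \<Rightarrow> bool" where
  "separable_set D \<longleftrightarrow> (\<exists>C. countable C \<and> C \<subseteq> D \<and> D \<subseteq> closure C)"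

definition positive_elem :: "('a::real_normed_algebra \<Rightarrow> 'a) \<Rightarrow> 'a \<Rightarrow> bool" where
  "positive_elem adj u \<longleftrightarrow> (\<exists>v. u = adj v * v)"

text \<open>D contains an approximate unit for the ambient algebra: a net of positive contractions
in D (encoded as a proper filter on elements) with u x \<rightarrow> x and x u \<rightarrow> x for every x.\<close>
definition contains_approx_unit ::
  "('a::{banach,real_normed_algebra} \<Rightarrow> 'a) \<Rightarrow> 'a set \<Rightarrow> bool" where
  "contains_approx_unit adj D \<longleftrightarrow>
     (\<exists>F::'a filter. F \<noteq> bot \<and>
        eventually (\<lambda>u. u \<in> D \<and> positive_elem adj u \<and> norm u \<le> 1) F \<and>
        (\<forall>x. ((\<lambda>u. u * x) \<longlongrightarrow> x) F \<and> ((\<lambda>u. x * u) \<longlongrightarrow> x) F))"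

definition sigma_unital :: "('a::{banach,real_normed_algebra} \<Rightarrow> 'a) \<Rightarrow> bool" where
  "sigma_unital adj \<longleftrightarrow>
     (\<exists>u::nat \<Rightarrow> 'a. (\<forall>n. positive_elem adj (u n) \<and> norm (u n) \<le> 1) \<and>
        (\<forall>x. (\<lambda>n. u n * x) \<longlonglongrightarrow> x \<and> (\<lambda>n. x * u n) \<longlonglongrightarrow> x))"

text \<open>Multiplier algebra M(D) of a sub-C*-algebra D, as double centralizers (L,R) on D
(maps are normalised to 0 outside D).\<close>
type_synonym 'a mult = "('a \<Rightarrow> 'a) \<times> ('a \<Rightarrow> 'a)"

definition multipliers :: "'a::real_normed_algebra set \<Rightarrow> 'a mult set" where
  "multipliers D = {(Lm, Rm).
      (\<forall>x\<in>D. Lm x \<in> D \<and> Rm x \<in> D) \<and>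
      (\<forall>x\<in>D. \<forall>y\<in>D. x * Lm y = Rm x * y) \<and>
      (\<forall>x. x \<notin> D \<longrightarrow> Lm x = 0 \<and> Rm x = 0)}"

text \<open>The natural map M(D) \<rightarrow> M(E) (E = UNIV): the multiplier of E agreeing with the
given one on D.\<close>
definition induced_mult :: "'a::real_normed_algebra set \<Rightarrow> 'a mult \<Rightarrow> 'a mult" where
  "induced_mult D m = (THE m'. m' \<in> multipliers UNIV \<and>
      (\<forall>d\<in>D. fst m' d = fst m d \<and> snd m' d = snd m d))"

definition madd :: "'a::real_normed_algebra mult \<Rightarrow> 'a mult \<Rightarrow> 'a mult" where
  "madd m n = ((\<lambda>x. fst m x + fst n x), (\<lambda>x. snd m x + snd n x))"
definition msc :: "(complex \<Rightarrow> 'a \<Rightarrow> 'a) \<Rightarrow> complex \<Rightarrow> 'a mult \<Rightarrow> 'a mult" where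
  "msc sc c m = ((\<lambda>x. sc c (fst m x)), (\<lambda>x. sc c (snd m x)))"
definition mmul :: "'a mult \<Rightarrow> 'a mult \<Rightarrow> 'a mult" where
  "mmul m n = (fst m \<circ> fst n, snd n \<circ> snd m)"
definition madj :: "('a \<Rightarrow> 'a) \<Rightarrow> 'a mult \<Rightarrow> 'a mult" where
  "madj adj m = (adj \<circ> snd m \<circ> adj, adj \<circ> fst m \<circ> adj)"
definition mnorm :: "'a::real_normed_vector mult \<Rightarrow> real" where
  "mnorm m = onorm (fst m)"
definition mdist :: "'a::real_normed_vector mult \<Rightarrow> 'a mult \<Rightarrow> real" where
  "mdist m n = mnorm ((\<lambda>x. fst m x - fst n x), (\<lambda>x. snd m x - snd n x))"

definition msub ::
  "(complex \<Rightarrow> 'a::{banach,real_normed_algebra} \<Rightarrow> 'a) \<Rightarrow> ('a \<Rightarrow> 'a) \<Rightarrow> 'a mult set \<Rightarrow> bool" where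
  "msub sc adj L \<longleftrightarrow> L \<subseteq> multipliers UNIV \<and> (\<lambda>_. 0, \<lambda>_. 0) \<in> L \<and>
     (\<forall>m\<in>L. \<forall>n\<in>L. madd m n \<in> L \<and> mmul m n \<in> L) \<and>
     (\<forall>m\<in>L. madj adj m \<in> L \<and> (\<forall>c. msc sc c m \<in> L)) \<and>
     (\<forall>s m. (\<forall>k. s k \<in> L) \<longrightarrow> m \<in> multipliers UNIV \<longrightarrow>
            (\<lambda>k. mdist (s k) m) \<longlonglongrightarrow> 0 \<longrightarrow> m \<in> L)"

definition mseparable :: "'a::real_normed_vector mult set \<Rightarrow> bool" where
  "mseparable L \<longleftrightarrow> (\<exists>C. countable C \<and> C \<subseteq> L \<and>
     (\<forall>m\<in>L. \<forall>e>0. \<exists>c\<in>C. mdist m c < e))"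

end

theory Submission
  imports Defs
begin

lemma cs_adj_norm:
  assumes "cstar_algebra sc adj" shows "norm (adj x) = norm x"
proof -
  have key: "norm y \<le> norm (adj y)" for y
  proof (cases "y = 0")
    case True then show ?thesis by simp
  next
    case False
    have "(norm y)\<^sup>2 = norm (adj y * y)" using assms unfolding cstar_algebra_def by metis
    also have "\<dots> \<le> norm (adj y) * norm y" by (rule norm_mult_ineq)
    finally have "norm y * norm y \<le> norm (adj y) * norm y" by (simp add: power2_eq_square)
    then show ?thesis using False by simp
  qed
  have "adj (adj x) = x" using assms unfolding cstar_algebra_def by metis
  then show ?thesis using key[of x] key[of "adj x"] by simp
qed

lemma cs_adj_bl:
  assumes "cstar_algebra sc adj" shows "bounded_linear adj"
proof (rule bounded_linear_intro[where K=1])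
  show "adj (x + y) = adj x + adj y" for x y using assms unfolding cstar_algebra_def by metis
  show "adj (scaleR r x) = scaleR r (adj x)" for r x
  proof -
    have "adj (scaleR r x) = adj (sc (complex_of_real r) x)" using assms unfolding cstar_algebra_def by metis
    also have "\<dots> = sc (cnj (complex_of_real r)) (adj x)" using assms unfolding cstar_algebra_def by metis
    also have "\<dots> = scaleR r (adj x)" using assms unfolding cstar_algebra_def by simp
    finally show ?thesis .
  qed
  show "norm (adj x) \<le> norm x * 1" for x using cs_adj_norm[OF assms] by simp
qed

lemma cs_sc_bl:
  assumes "cstar_algebra sc adj" shows "bounded_linear (sc c)"
proof (rule bounded_linear_intro[where K="cmod c"])
  show "sc c (x + y) = sc c x + sc c y" for x y using assms unfolding cstar_algebra_def by metis
  show "sc c (scaleR r x) = scaleR r (sc c x)" for r x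
  proof -
    have "sc c (scaleR r x) = sc c (sc (complex_of_real r) x)" using assms unfolding cstar_algebra_def by metis
    also have "\<dots> = sc (c * complex_of_real r) x" using assms unfolding cstar_algebra_def by metis
    also have "\<dots> = sc (complex_of_real r) (sc c x)" using assms unfolding cstar_algebra_def
      by (metis mult.commute)
    also have "\<dots> = scaleR r (sc c x)" using assms unfolding cstar_algebra_def by metis
    finally show ?thesis .
  qed
  show "norm (sc c x) \<le> norm x * cmod c" for x using assms unfolding cstar_algebra_def by (simp add: mult.commute)
qed

lemma cs_sc_decomp:
  assumes "cstar_algebra sc adj"
  shows "sc c x = scaleR (Re c) x + scaleR (Im c) (sc \<i> x)"
proof -
  have "sc c x = sc (complex_of_real (Re c) + complex_of_real (Im c) * \<i>) x"
    by (metis complex_eq mult.commute)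
  also have "\<dots> = sc (complex_of_real (Re c)) x + sc (complex_of_real (Im c) * \<i>) x"
    using assms unfolding cstar_algebra_def by metis
  also have "\<dots> = scaleR (Re c) x + scaleR (Im c) (sc \<i> x)"
    using assms unfolding cstar_algebra_def by metis
  finally show ?thesis .
qed

lemma ubp:
  fixes a :: "nat \<Rightarrow> 'a::{banach,real_normed_algebra}"
  assumes pb: "\<And>x. \<exists>B. \<forall>n. norm (a n * x) \<le> B"
  shows "\<exists>K. \<forall>n x. norm (a n * x) \<le> K * norm x"
proof -
  define F where "F k = {x. \<forall>n. norm (a n * x) \<le> real k}" for k :: nat
  have clF: "closed (F k)" for k
  proof -
    have "F k = (\<Inter>n. {x. norm (a n * x) \<le> real k})" unfolding F_def by auto
    moreover have "closed {x. norm (a n * x) \<le> real k}" for n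
      by (intro closed_Collect_le continuous_intros)
    ultimately show ?thesis by auto
  qed
  have cov: "(\<Union>k. F k) = UNIV"
  proof safe
    fix x
    obtain B where B: "\<forall>n. norm (a n * x) \<le> B" using pb by blast
    obtain k :: nat where "B \<le> real k" using real_arch_simple by blast
    then have "x \<in> F k" unfolding F_def using B by (auto intro: order_trans)
    then show "x \<in> (\<Union>k. F k)" by blast
  qed simp
  have "\<exists>k. interior (F k) \<noteq> {}"
  proof (rule ccontr)
    assume "\<nexists>k. interior (F k) \<noteq> {}"
    then have "euclidean interior_of \<Union>(range F) = {}"
      by (intro Baire_category_alt) (auto simp: completely_metrizable_space_euclidean clF)
    with cov show False by simp
  qed
  then obtain k x0 where "x0 \<in> interior (F k)" by blast
  then obtain r where r: "r > 0" "ball x0 r \<subseteq> F k" by (meson open_contains_ball open_interior interior_subset subset_trans)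
  have small: "norm (a n * y) \<le> 2 * real k" if "norm y < r" for n y
  proof -
    have "x0 + y \<in> F k" using r that by (auto simp: dist_norm)
    moreover have "x0 \<in> F k" using r by auto
    ultimately have "norm (a n * (x0 + y)) \<le> real k" "norm (a n * x0) \<le> real k" unfolding F_def by auto
    moreover have "a n * y = a n * (x0 + y) - a n * x0" by (simp add: algebra_simps)
    ultimately show ?thesis by (metis norm_triangle_ineq4 order_trans add_mono mult_2)
  qed
  show ?thesis
  proof (intro exI allI)
    fix n x
    show "norm (a n * x) \<le> (4 * real k / r) * norm x"
    proof (cases "x = 0")
      case True then show ?thesis by simp
    next
      case False
      define t where "t = r / (2 * norm x)"
      have t: "t > 0" using r False by (simp add: t_def)
      have "norm (scaleR t x) < r" using r False by (simp add: t_def)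
      then have "norm (a n * scaleR t x) \<le> 2 * real k" by (rule small)
      then have "t * norm (a n * x) \<le> 2 * real k" using t by (simp add: mult_scaleR_right)
      then have "norm (a n * x) \<le> 2 * real k / t" using t by (simp add: field_simps)
      also have "2 * real k / t = (4 * real k / r) * norm x" using r False by (simp add: t_def field_simps)
      finally show ?thesis .
    qed
  qed
qed

lemma mult_id: "m \<in> multipliers UNIV \<Longrightarrow> x * fst m y = snd m x * y"
  by (cases m) (auto simp: multipliers_def)

lemma cancelL:
  fixes u :: "nat \<Rightarrow> 'a::real_normed_algebra"
  assumes au: "\<And>x. (\<lambda>n. u n * x) \<longlonglongrightarrow> x" and eq: "\<And>n. u n * a = u n * b"
  shows "a = b"
proof -
  have "(\<lambda>n. u n * a) \<longlonglongrightarrow> b" using au[of b] eq by simp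
  then show ?thesis using au[of a] LIMSEQ_unique by blast
qed

lemma cancelR:
  fixes u :: "nat \<Rightarrow> 'a::real_normed_algebra"
  assumes au: "\<And>x. (\<lambda>n. x * u n) \<longlonglongrightarrow> x" and eq: "\<And>n. a * u n = b * u n"
  shows "a = b"
proof -
  have "(\<lambda>n. a * u n) \<longlonglongrightarrow> b" using au[of b] eq by simp
  then show ?thesis using au[of a] LIMSEQ_unique by blast
qed

lemma mult_bl:
  fixes u :: "nat \<Rightarrow> 'a::{banach,real_normed_algebra}" and m :: "'a mult"
  assumes au: "\<And>x. (\<lambda>n. u n * x) \<longlonglongrightarrow> x" and m: "m \<in> multipliers UNIV"
  shows "bounded_linear (fst m)"
proof -
  define a where "a n = snd m (u n)" for n
  have conv: "(\<lambda>n. a n * x) \<longlonglongrightarrow> fst m x" for x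
  proof -
    have "a n * x = u n * fst m x" for n using mult_id[OF m, of "u n" x] by (simp add: a_def)
    then show ?thesis using au[of "fst m x"] by simp
  qed
  have "\<exists>B. \<forall>n. norm (a n * x) \<le> B" for x
  proof -
    have "Bseq (\<lambda>n. a n * x)" using conv[of x] convergent_imp_Bseq convergentI by blast
    then show ?thesis by (meson BseqE)
  qed
  then obtain K where K: "\<And>n x. norm (a n * x) \<le> K * norm x" using ubp by blast
  show ?thesis
  proof (rule bounded_linear_intro[where K=K])
    show "fst m (x + y) = fst m x + fst m y" for x y
      using cancelL[OF au] mult_id[OF m] by (metis distrib_left)
    show "fst m (scaleR r x) = scaleR r (fst m x)" for r x
      using cancelL[OF au] mult_id[OF m] by (metis mult_scaleR_right)
    show "norm (fst m x) \<le> norm x * K" for x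
    proof -
      have "(\<lambda>n. norm (a n * x)) \<longlonglongrightarrow> norm (fst m x)" using conv by (rule tendsto_norm)
      then have "norm (fst m x) \<le> K * norm x" using K by (meson LIMSEQ_le_const2)
      then show ?thesis by (simp add: mult.commute)
    qed
  qed
qed

lemma mult_uniq:
  fixes u :: "nat \<Rightarrow> 'a::real_normed_algebra" and m m' :: "'a mult"
  assumes auL: "\<And>x. (\<lambda>n. u n * x) \<longlonglongrightarrow> x" and auR: "\<And>x. (\<lambda>n. x * u n) \<longlonglongrightarrow> x"
    and m: "m \<in> multipliers UNIV" and m': "m' \<in> multipliers UNIV"
    and agree: "\<And>n. fst m (u n) = fst m' (u n) \<and> snd m (u n) = snd m' (u n)"
  shows "m = m'"
proof -
  have "fst m x = fst m' x" for x
    using cancelL[OF auL] mult_id[OF m] mult_id[OF m'] agree by metis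
  moreover have "snd m x = snd m' x" for x
    using cancelR[OF auR] mult_id[OF m] mult_id[OF m'] agree by metis
  ultimately show ?thesis by (simp add: prod_eq_iff fun_eq_iff)
qed

definition stepP :: "(complex \<Rightarrow> 'a::real_normed_algebra \<Rightarrow> 'a) \<Rightarrow> ('a \<Rightarrow> 'a) \<Rightarrow> 'a mult set \<Rightarrow> 'a set \<Rightarrow> 'a set" where
  "stepP sc adj C S = S \<union> (\<lambda>(x,y). x + y) ` (S \<times> S) \<union> (\<lambda>(x,y). x * y) ` (S \<times> S) \<union> adj ` S
     \<union> sc \<i> ` S \<union> (\<lambda>(q,x). scaleR (real_of_rat q) x) ` (UNIV \<times> S) \<union> (\<lambda>(c,x). fst c x) ` (C \<times> S)"

definition genP where "genP sc adj C G0 = (\<Union>k. (stepP sc adj C ^^ k) G0)"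

lemma genP_countable:
  assumes "countable G0" "countable C" shows "countable (genP sc adj C G0)"
proof -
  have "countable ((stepP sc adj C ^^ k) G0)" for k
  proof (induction k)
    case 0 then show ?case using assms by simp
  next
    case (Suc k)
    then show ?case using assms(2) unfolding stepP_def by (simp add: countable_SIGMA)
  qed
  then show ?thesis unfolding genP_def by auto
qed

lemma genP_mono: "i \<le> j \<Longrightarrow> (stepP sc adj C ^^ i) G0 \<subseteq> (stepP sc adj C ^^ j) G0"
proof (induction j)
  case 0 then show ?case by simp
next
  case (Suc j)
  have "(stepP sc adj C ^^ j) G0 \<subseteq> (stepP sc adj C ^^ Suc j) G0" by (auto simp: stepP_def)
  show ?case
  proof (cases "i = Suc j")
    case True then show ?thesis by simp
  next
    case False
    with Suc.prems have "i \<le> j" by simp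
    with Suc.IH \<open>(stepP sc adj C ^^ j) G0 \<subseteq> (stepP sc adj C ^^ Suc j) G0\<close> show ?thesis by blast
  qed
qed

lemma genP_two:
  assumes "x \<in> genP sc adj C G0" "y \<in> genP sc adj C G0"
  obtains k where "x \<in> (stepP sc adj C ^^ k) G0" "y \<in> (stepP sc adj C ^^ k) G0"
proof -
  obtain i j where "x \<in> (stepP sc adj C ^^ i) G0" "y \<in> (stepP sc adj C ^^ j) G0"
    using assms unfolding genP_def by auto
  then show ?thesis using that genP_mono[of i "max i j" sc adj C G0] genP_mono[of j "max i j" sc adj C G0] by auto
qed

lemma genP_step: "x \<in> (stepP sc adj C ^^ k) G0 \<Longrightarrow> x \<in> genP sc adj C G0"
  unfolding genP_def by auto

lemma genP_G0: "G0 \<subseteq> genP sc adj C G0"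
proof
  fix x assume "x \<in> G0"
  then have "x \<in> (stepP sc adj C ^^ 0) G0" by simp
  then show "x \<in> genP sc adj C G0" unfolding genP_def by blast
qed

lemma stepP_mem:
  assumes "x \<in> S" "y \<in> S"
  shows "x + y \<in> stepP sc adj C S" "x * y \<in> stepP sc adj C S" "adj x \<in> stepP sc adj C S"
    "sc \<i> x \<in> stepP sc adj C S" "scaleR (real_of_rat q) x \<in> stepP sc adj C S"
    "c \<in> C \<Longrightarrow> fst c x \<in> stepP sc adj C S"
proof -
  have "(\<lambda>(x,y). x + y) (x,y) \<in> (\<lambda>(x,y). x + y) ` (S \<times> S)" using assms by blast
  then show "x + y \<in> stepP sc adj C S" unfolding stepP_def by auto
  have "(\<lambda>(x,y). x * y) (x,y) \<in> (\<lambda>(x,y). x * y) ` (S \<times> S)" using assms by blast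
  then show "x * y \<in> stepP sc adj C S" unfolding stepP_def by auto
  show "adj x \<in> stepP sc adj C S" unfolding stepP_def using assms by blast
  show "sc \<i> x \<in> stepP sc adj C S" unfolding stepP_def using assms by blast
  have "(\<lambda>(q,x). scaleR (real_of_rat q) x) (q,x) \<in> (\<lambda>(q,x). scaleR (real_of_rat q) x) ` (UNIV \<times> S)" using assms by blast
  then show "scaleR (real_of_rat q) x \<in> stepP sc adj C S" unfolding stepP_def by auto
  show "fst c x \<in> stepP sc adj C S" if "c \<in> C"
  proof -
    have "(\<lambda>(c,x). fst c x) (c,x) \<in> (\<lambda>(c,x). fst c x) ` (C \<times> S)" using assms that by blast
    then show ?thesis unfolding stepP_def by auto
  qed
qed

lemma genP_ops:
  assumes "x \<in> genP sc adj C G0" "y \<in> genP sc adj C G0"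
  shows "x + y \<in> genP sc adj C G0" "x * y \<in> genP sc adj C G0" "adj x \<in> genP sc adj C G0"
    "sc \<i> x \<in> genP sc adj C G0" "scaleR (real_of_rat q) x \<in> genP sc adj C G0"
    "c \<in> C \<Longrightarrow> fst c x \<in> genP sc adj C G0"
proof -
  obtain k where k: "x \<in> (stepP sc adj C ^^ k) G0" "y \<in> (stepP sc adj C ^^ k) G0"
    using genP_two[OF assms] by blast
  let ?S = "(stepP sc adj C ^^ k) G0"
  have h: "z \<in> genP sc adj C G0" if "z \<in> stepP sc adj C ?S" for z
    by (rule genP_step[where k="Suc k"]) (simp add: that)
  show "x + y \<in> genP sc adj C G0" "x * y \<in> genP sc adj C G0" "adj x \<in> genP sc adj C G0"
    "sc \<i> x \<in> genP sc adj C G0" "scaleR (real_of_rat q) x \<in> genP sc adj C G0"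
    by (rule h, rule stepP_mem, rule k, rule k)+
  show "fst c x \<in> genP sc adj C G0" if "c \<in> C"
    by (rule h, rule stepP_mem, rule k, rule k, rule that)
qed

lemma bl_closure:
  assumes "bounded_linear f" "f ` P \<subseteq> P" shows "f ` closure P \<subseteq> closure P"
proof (rule image_closure_subset)
  show "continuous_on (closure P) f" using assms(1) by (rule linear_continuous_on)
  show "f ` P \<subseteq> closure P" using assms(2) closure_subset by blast
qed simp

lemma aux_lt:
  fixes x :: "'a::real_normed_vector"
  assumes e: "e > 0" shows "(e / (norm x + 1)) * norm x < e"
proof -
  have h: "0 < norm x + 1" using norm_ge_zero[of x] by linarith
  have "e * norm x < e * (norm x + 1)" using e by simp
  then have "e * norm x / (norm x + 1) < e" using h by (simp add: pos_divide_less_eq mult.commute)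
  then show ?thesis by simp
qed

theorem mainTheorem10:
  fixes sc :: "complex \<Rightarrow> 'a::{banach,real_normed_algebra} \<Rightarrow> 'a"
    and adj :: "'a \<Rightarrow> 'a"
    and L :: "'a mult set"
  assumes "cstar_algebra sc adj"
    and "sigma_unital adj"
    and "msub sc adj L"
    and "mseparable L"
  shows "\<exists>D. csub sc adj D \<and> separable_set D \<and> contains_approx_unit adj D \<and>
             L \<subseteq> induced_mult D ` multipliers D"
proof -
  note cs = assms(1)
  from assms(2) obtain u :: "nat \<Rightarrow> 'a" where u: "\<And>n. positive_elem adj (u n) \<and> norm (u n) \<le> 1"
    and auL: "\<And>x. (\<lambda>n. u n * x) \<longlonglongrightarrow> x" and auR: "\<And>x. (\<lambda>n. x * u n) \<longlonglongrightarrow> x"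
    unfolding sigma_unital_def by blast
  from assms(4) obtain C where Cc: "countable C" and CL: "C \<subseteq> L"
    and Cd: "\<And>m e. m \<in> L \<Longrightarrow> e > 0 \<Longrightarrow> \<exists>c\<in>C. mdist m c < e"
    unfolding mseparable_def by blast
  have LM: "L \<subseteq> multipliers UNIV" using assms(3) unfolding msub_def by blast
  have Ladj: "m \<in> L \<Longrightarrow> madj adj m \<in> L" for m using assms(3) unfolding msub_def by blast
  have blL: "m \<in> L \<Longrightarrow> bounded_linear (fst m)" for m using mult_bl[OF auL] LM by blast
  define P where "P = genP sc adj C (range u)"
  define D where "D = closure P"
  have clD: "closed D" unfolding D_def by simp
  have PD: "P \<subseteq> D" unfolding D_def by (rule closure_subset)
  have Pc: "countable P" unfolding P_def by (rule genP_countable) (use Cc in auto)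
  have uD: "u n \<in> D" for n using genP_G0[of "range u" sc adj C] PD unfolding P_def by blast
  have Dadd: "x + y \<in> D" if xD: "x \<in> D" and yD: "y \<in> D" for x y
  proof -
    obtain s where s: "\<And>n. s n \<in> P" "s \<longlonglongrightarrow> x" using xD unfolding D_def closure_sequential by blast
    obtain t where t: "\<And>n. t n \<in> P" "t \<longlonglongrightarrow> y" using yD unfolding D_def closure_sequential by blast
    have "(\<lambda>n. s n + t n) \<longlonglongrightarrow> x + y" using s t by (intro tendsto_add)
    moreover have "s n + t n \<in> P" for n using s t genP_ops(1)[of "s n" sc adj C "range u" "t n"] unfolding P_def by blast
    ultimately show ?thesis unfolding D_def closure_sequential by (intro exI[where x="\<lambda>n. s n + t n"]) auto
  qed
  have Dmul: "x * y \<in> D" if xD: "x \<in> D" and yD: "y \<in> D" for x y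
  proof -
    obtain s where s: "\<And>n. s n \<in> P" "s \<longlonglongrightarrow> x" using xD unfolding D_def closure_sequential by blast
    obtain t where t: "\<And>n. t n \<in> P" "t \<longlonglongrightarrow> y" using yD unfolding D_def closure_sequential by blast
    have "(\<lambda>n. s n * t n) \<longlonglongrightarrow> x * y" using s t by (intro tendsto_mult)
    moreover have "s n * t n \<in> P" for n using s t genP_ops(2)[of "s n" sc adj C "range u" "t n"] unfolding P_def by blast
    ultimately show ?thesis unfolding D_def closure_sequential by (intro exI[where x="\<lambda>n. s n * t n"]) auto
  qed
  have Dadj: "adj x \<in> D" if "x \<in> D" for x
  proof -
    have "adj ` P \<subseteq> P" using genP_ops(3)[of _ sc adj C "range u"] unfolding P_def by blast
    then show ?thesis using bl_closure[OF cs_adj_bl[OF cs]] that unfolding D_def by blast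
  qed
  have Dsci: "sc \<i> x \<in> D" if "x \<in> D" for x
  proof -
    have "sc \<i> ` P \<subseteq> P" using genP_ops(4)[of _ sc adj C "range u"] unfolding P_def by blast
    then show ?thesis using bl_closure[OF cs_sc_bl[OF cs]] that unfolding D_def by blast
  qed
  have Dq: "scaleR (real_of_rat q) x \<in> D" if "x \<in> D" for x q
  proof -
    have "scaleR (real_of_rat q) ` P \<subseteq> P" using genP_ops(5)[of _ sc adj C "range u" _ q] unfolding P_def by blast
    then show ?thesis using bl_closure[OF bounded_linear_scaleR_right] that unfolding D_def by blast
  qed
  have DR: "scaleR r x \<in> D" if "x \<in> D" for x r
  proof -
    have "scaleR r x \<in> closure D"
      unfolding closure_approachable
    proof (intro allI impI)
      fix e :: real assume e: "e > 0"
      have pos: "0 < e / (norm x + 1)" using e norm_ge_zero[of x] by (intro divide_pos_pos) linarith+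
      have "r < r + e / (norm x + 1)" using pos by simp
      then obtain q where q: "q \<in> \<rat>" "r < q" "q < r + e / (norm x + 1)" using Rats_dense_in_real by blast
      then obtain q' where q': "q = real_of_rat q'" by (auto elim: Rats_cases)
      have "dist (scaleR q x) (scaleR r x) = \<bar>q - r\<bar> * norm x"
        by (simp add: dist_norm scaleR_diff_left[symmetric])
      also have "\<dots> \<le> (e / (norm x + 1)) * norm x" using q by (intro mult_right_mono) auto
      also have "\<dots> < e" using e by (rule aux_lt)
      finally show "\<exists>y\<in>D. dist y (scaleR r x) < e" using Dq[OF that, of q'] q' by blast
    qed
    then show ?thesis using clD by simp
  qed
  have Dsc: "sc c x \<in> D" if "x \<in> D" for x c
    using cs_sc_decomp[OF cs, of c x] Dadd DR Dsci that by metis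
  have DfC: "fst c x \<in> D" if "c \<in> C" "x \<in> D" for c x
  proof -
    have "fst c ` P \<subseteq> P" using genP_ops(6)[of _ sc adj C "range u" _ c] that(1) unfolding P_def by blast
    then show ?thesis using bl_closure[OF blL] CL that unfolding D_def by blast
  qed
  have DfL: "fst m x \<in> D" if m: "m \<in> L" and x: "x \<in> D" for m x
  proof -
    have "fst m x \<in> closure D"
      unfolding closure_approachable
    proof (intro allI impI)
      fix e :: real assume e: "e > 0"
      have pos: "0 < e / (norm x + 1)" using e norm_ge_zero[of x] by (intro divide_pos_pos) linarith+
      obtain c where c: "c \<in> C" "mdist m c < e / (norm x + 1)"
        using Cd[OF m pos] by blast
      have bl: "bounded_linear (\<lambda>x. fst m x - fst c x)"
        using blL[OF m] blL[of c] c CL by (intro bounded_linear_sub) auto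
      have md: "mdist m c = onorm (\<lambda>x. fst m x - fst c x)" by (simp add: mdist_def mnorm_def)
      have "dist (fst c x) (fst m x) = norm (fst m x - fst c x)" by (simp add: dist_norm norm_minus_commute)
      also have "\<dots> \<le> mdist m c * norm x" using onorm[OF bl, of x] md by simp
      also have "\<dots> \<le> (e / (norm x + 1)) * norm x" using c by (intro mult_right_mono) auto
      also have "\<dots> < e" using e by (rule aux_lt)
      finally show "\<exists>y\<in>D. dist y (fst m x) < e" using DfC[OF c(1) x] by blast
    qed
    then show ?thesis using clD by simp
  qed
  have adjadj: "adj (adj x) = x" for x using cs unfolding cstar_algebra_def by metis
  have DsL: "snd m x \<in> D" if m: "m \<in> L" and x: "x \<in> D" for m x
  proof -
    have "fst (madj adj m) (adj x) \<in> D" using DfL[OF Ladj[OF m] Dadj[OF x]] .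
    then have "adj (fst (madj adj m) (adj x)) \<in> D" by (rule Dadj)
    then show ?thesis by (simp add: madj_def adjadj)
  qed
  have "csub sc adj D"
    unfolding csub_def
  proof (intro conjI ballI allI)
    show "0 \<in> D" using DR[OF uD, of 0 0] by simp
  qed (use Dadd Dmul Dadj Dsc clD in auto)
  moreover have "separable_set D"
    unfolding separable_set_def using Pc PD D_def by blast
  moreover have "contains_approx_unit adj D"
    unfolding contains_approx_unit_def
  proof (intro exI[of _ "filtermap u sequentially"] conjI allI)
    show "filtermap u sequentially \<noteq> bot" by (simp add: filtermap_bot_iff)
    show "eventually (\<lambda>v. v \<in> D \<and> positive_elem adj v \<and> norm v \<le> 1) (filtermap u sequentially)"
      by (simp add: eventually_filtermap uD u)
    show "((\<lambda>v. v * x) \<longlongrightarrow> x) (filtermap u sequentially)" for x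
      by (simp add: filterlim_filtermap auL)
    show "((\<lambda>v. x * v) \<longlongrightarrow> x) (filtermap u sequentially)" for x
      by (simp add: filterlim_filtermap auR)
  qed
  moreover have "L \<subseteq> induced_mult D ` multipliers D"
  proof
    fix m assume m: "m \<in> L"
    have mM: "m \<in> multipliers UNIV" using m LM by blast
    define m0 where "m0 = ((\<lambda>x. if x \<in> D then fst m x else 0), (\<lambda>x. if x \<in> D then snd m x else 0))"
    have "m0 \<in> multipliers D"
      unfolding multipliers_def m0_def using DfL[OF m] DsL[OF m] mult_id[OF mM] by auto
    moreover have "induced_mult D m0 = m"
      unfolding induced_mult_def
    proof (rule the_equality)
      show "m \<in> multipliers UNIV \<and> (\<forall>d\<in>D. fst m d = fst m0 d \<and> snd m d = snd m0 d)"
        using mM by (simp add: m0_def)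
      fix m' assume m': "m' \<in> multipliers UNIV \<and> (\<forall>d\<in>D. fst m' d = fst m0 d \<and> snd m' d = snd m0 d)"
      show "m' = m"
        by (rule mult_uniq[OF auL auR]) (use m' mM uD in \<open>auto simp: m0_def\<close>)
    qed
    ultimately show "m \<in> induced_mult D ` multipliers D" by (metis image_eqI)
  qed
  ultimately show ?thesis by blast
qed

end
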